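(* Let $K$ be a field and $P$ an arbitrary poset. An element $\alpha\in FI(P)$ is regular (i.e. there exists $\chi\in FI(P)$ with $\alpha\chi\alpha=\alpha$) if and only if there exist a diagonal idempotent $\varepsilon\in FI(P)$ and invertible elements $\beta,\gamma\in FI(P)$ such that $\alpha=\beta\varepsilon\gamma$.
   Context: $K$ is a field, $P$ an arbitrary poset. $I(P)$ is the set of functions $\alpha$ assigning to each pair $x\le y$ in $P$ a value $\alpha(x,y)\in K$. An element $\alpha\in I(P)$ is a finitary series if for all $x<y$ in $P$ there are only finitely many pairs $(u,v)$ with $x\le u<v\le y$ and $\alpha(u,v)\neq0$; $FI(P)$ is the set of finitary series. $FI(P)$ is an associative $K$-algebra under pointwise addition and convolution $(\alpha\beta)(x,y)=\sum_{x\le z\le y}\alpha(x,z)\beta(z,y)$, with identity $\delta$ given by $\delta(x,y)=1$ if $x=y$ and $0$ otherwise. An element $\alpha\in FI(P)$ is diagonal if $\alpha(x,y)=0$ whenever $x\neq y$; a diagonal element is idempotent iff each $\alpha(x,x)\in\{0,1\}$. *)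

theory Defs
  imports Main
begin

text \<open>Elements of I(P) are represented as functions p => p => k which vanish
  off the relation x <= y.  The poset P is the type 'p of class order, K is a
  field 'k.\<close>

definition finitary :: "('p::order \<Rightarrow> 'p \<Rightarrow> 'k::field) \<Rightarrow> bool" where
  "finitary \<alpha> \<longleftrightarrow>
     (\<forall>x y. x < y \<longrightarrow> finite {(u, v). x \<le> u \<and> u < v \<and> v \<le> y \<and> \<alpha> u v \<noteq> 0})"

definition FI :: "('p::order \<Rightarrow> 'p \<Rightarrow> 'k::field) set" where
  "FI = {\<alpha>. (\<forall>x y. \<not> x \<le> y \<longrightarrow> \<alpha> x y = 0) \<and> finitary \<alpha>}"

text \<open>Convolution. For finitary series the sum has only finitely many nonzero
  terms; we sum over exactly those.\<close>
definition conv :: "('p::order \<Rightarrow> 'p \<Rightarrow> 'k::field) \<Rightarrow> ('p \<Rightarrow> 'p \<Rightarrow> 'k) \<Rightarrow> 'p \<Rightarrow> 'p \<Rightarrow> 'k" where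
  "conv \<alpha> \<beta> x y =
     (if x \<le> y then (\<Sum>z\<in>{z. x \<le> z \<and> z \<le> y \<and> \<alpha> x z * \<beta> z y \<noteq> 0}. \<alpha> x z * \<beta> z y) else 0)"

definition delta :: "'p::order \<Rightarrow> 'p \<Rightarrow> 'k::field" where
  "delta x y = (if x = y then 1 else 0)"

definition regular_FI :: "('p::order \<Rightarrow> 'p \<Rightarrow> 'k::field) \<Rightarrow> bool" where
  "regular_FI \<alpha> \<longleftrightarrow> (\<exists>\<chi>\<in>FI. conv (conv \<alpha> \<chi>) \<alpha> = \<alpha>)"

definition invertible_FI :: "('p::order \<Rightarrow> 'p \<Rightarrow> 'k::field) \<Rightarrow> bool" where
  "invertible_FI \<beta> \<longleftrightarrow> \<beta> \<in> FI \<and> (\<exists>\<beta>'\<in>FI. conv \<beta> \<beta>' = delta \<and> conv \<beta>' \<beta> = delta)"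

definition diagonal :: "('p::order \<Rightarrow> 'p \<Rightarrow> 'k::field) \<Rightarrow> bool" where
  "diagonal \<alpha> \<longleftrightarrow> (\<forall>x y. x \<noteq> y \<longrightarrow> \<alpha> x y = 0)"

definition idempotent_FI :: "('p::order \<Rightarrow> 'p \<Rightarrow> 'k::field) \<Rightarrow> bool" where
  "idempotent_FI \<alpha> \<longleftrightarrow> conv \<alpha> \<alpha> = \<alpha>"

end

theory Submission
  imports Defs
begin


definition NN :: "('p::order \<Rightarrow> 'p \<Rightarrow> 'k::field) \<Rightarrow> 'p \<Rightarrow> 'p \<Rightarrow> ('p \<times> 'p) set" where
  "NN \<alpha> x y = {(u, v). x \<le> u \<and> u < v \<and> v \<le> y \<and> \<alpha> u v \<noteq> 0}"

definition pts :: "('p::order \<Rightarrow> 'p \<Rightarrow> 'k::field) \<Rightarrow> 'p \<Rightarrow> 'p \<Rightarrow> 'p set" where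
  "pts \<alpha> x y = fst ` NN \<alpha> x y \<union> snd ` NN \<alpha> x y"

lemma FI_zero: "\<alpha> \<in> FI \<Longrightarrow> \<not> x \<le> y \<Longrightarrow> \<alpha> x y = 0"
  by (simp add: FI_def)

lemma FI_finN: assumes "\<alpha> \<in> FI" shows "finite (NN \<alpha> x y)"
proof (cases "x < y")
  case True then show ?thesis using assms by (simp add: FI_def finitary_def NN_def)
next
  case False
  then have "NN \<alpha> x y = {}" unfolding NN_def using order_le_less_trans less_le_trans
    by (smt (verit) case_prodE empty_Collect_eq)
  then show ?thesis by simp
qed

lemma finite_pts: "\<alpha> \<in> FI \<Longrightarrow> finite (pts \<alpha> x y)"
  by (simp add: pts_def FI_finN)

lemma ptsI: "x \<le> u \<Longrightarrow> u < z \<Longrightarrow> z \<le> y \<Longrightarrow> \<alpha> u z \<noteq> 0 \<Longrightarrow> u \<in> pts \<alpha> x y \<and> z \<in> pts \<alpha> x y"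
  unfolding pts_def NN_def by (force simp: image_iff)

lemma finitary_intro:
  assumes "\<And>x y. x < y \<Longrightarrow> \<exists>A. finite A \<and> (\<forall>u v. x \<le> u \<and> u < v \<and> v \<le> y \<and> \<alpha> u v \<noteq> 0 \<longrightarrow> u \<in> A \<and> v \<in> A)"
  shows "finitary \<alpha>"
  unfolding finitary_def
proof (intro allI impI)
  fix x y :: 'a assume "x < y"
  from assms[OF this] obtain A where A: "finite A" "\<forall>u v. x \<le> u \<and> u < v \<and> v \<le> y \<and> \<alpha> u v \<noteq> 0 \<longrightarrow> u \<in> A \<and> v \<in> A" by blast
  have "{(u, v). x \<le> u \<and> u < v \<and> v \<le> y \<and> \<alpha> u v \<noteq> 0} \<subseteq> A \<times> A" using A(2) by auto
  then show "finite {(u, v). x \<le> u \<and> u < v \<and> v \<le> y \<and> \<alpha> u v \<noteq> 0}"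
    using A(1) finite_subset by blast
qed

lemma conv_S:
  assumes "finite S" "x \<le> y" "\<And>z. x \<le> z \<Longrightarrow> z \<le> y \<Longrightarrow> \<alpha> x z * \<beta> z y \<noteq> 0 \<Longrightarrow> z \<in> S"
  shows "conv \<alpha> \<beta> x y = (\<Sum>z\<in>S. if x \<le> z \<and> z \<le> y then \<alpha> x z * \<beta> z y else 0)"
proof -
  have "(\<Sum>z\<in>S. if x \<le> z \<and> z \<le> y then \<alpha> x z * \<beta> z y else 0) = (\<Sum>z\<in>{z\<in>S. x\<le>z\<and>z\<le>y}. \<alpha> x z * \<beta> z y)"
    using assms(1) by (simp add: sum.inter_filter)
  also have "\<dots> = (\<Sum>z\<in>{z. x \<le> z \<and> z \<le> y \<and> \<alpha> x z * \<beta> z y \<noteq> 0}. \<alpha> x z * \<beta> z y)"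
    by (rule sum.mono_neutral_right) (use assms in auto)
  finally show ?thesis using assms(2) by (simp add: conv_def)
qed

lemma supp_fin1: assumes "\<alpha> \<in> FI" shows "finite {z. x \<le> z \<and> z \<le> y \<and> \<alpha> x z * \<beta> z y \<noteq> 0}"
proof -
  have "{z. x \<le> z \<and> z \<le> y \<and> \<alpha> x z * \<beta> z y \<noteq> 0} \<subseteq> insert x (pts \<alpha> x y)"
    using ptsI[of x x _ y \<alpha>] by (auto simp: order.order_iff_strict)
  then show ?thesis using finite_pts[OF assms] finite_subset by blast
qed

lemma supp_fin2: assumes "\<beta> \<in> FI" shows "finite {z. x \<le> z \<and> z \<le> y \<and> \<alpha> x z * \<beta> z y \<noteq> 0}"
proof -
  have "{z. x \<le> z \<and> z \<le> y \<and> \<alpha> x z * \<beta> z y \<noteq> 0} \<subseteq> insert y (pts \<beta> x y)"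
    using ptsI[of x _ y y \<beta>] by (auto simp: order.order_iff_strict)
  then show ?thesis using finite_pts[OF assms] finite_subset by blast
qed

lemma conv_FI: assumes "\<alpha> \<in> FI" "\<beta> \<in> FI" shows "conv \<alpha> \<beta> \<in> FI"
proof -
  have "finitary (conv \<alpha> \<beta>)"
  proof (rule finitary_intro)
    fix x y :: 'a assume "x < y"
    show "\<exists>A. finite A \<and> (\<forall>u v. x \<le> u \<and> u < v \<and> v \<le> y \<and> conv \<alpha> \<beta> u v \<noteq> 0 \<longrightarrow> u \<in> A \<and> v \<in> A)"
    proof (rule exI[of _ "pts \<alpha> x y \<union> pts \<beta> x y"], rule conjI)
      show "finite (pts \<alpha> x y \<union> pts \<beta> x y)" using assms finite_pts by blast
      show "\<forall>u v. x \<le> u \<and> u < v \<and> v \<le> y \<and> conv \<alpha> \<beta> u v \<noteq> 0 \<longrightarrow> u \<in> pts \<alpha> x y \<union> pts \<beta> x y \<and> v \<in> pts \<alpha> x y \<union> pts \<beta> x y"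
      proof (intro allI impI)
      fix u v assume h: "x \<le> u \<and> u < v \<and> v \<le> y \<and> conv \<alpha> \<beta> u v \<noteq> 0"
      then have "(\<Sum>z\<in>{z. u \<le> z \<and> z \<le> v \<and> \<alpha> u z * \<beta> z v \<noteq> 0}. \<alpha> u z * \<beta> z v) \<noteq> 0"
        using less_imp_le[of u v] unfolding conv_def by auto
      then have "{z. u \<le> z \<and> z \<le> v \<and> \<alpha> u z * \<beta> z v \<noteq> 0} \<noteq> {}"
        by (metis sum.empty)
      then obtain z where z: "u \<le> z" "z \<le> v" "\<alpha> u z \<noteq> 0" "\<beta> z v \<noteq> 0" by auto
      have xz: "x \<le> z" "z \<le> y" using h z order_trans by blast+
      show "u \<in> pts \<alpha> x y \<union> pts \<beta> x y \<and> v \<in> pts \<alpha> x y \<union> pts \<beta> x y"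
      proof (cases "u = z")
        case True then show ?thesis using ptsI[of x u v y \<beta>] h z by auto
      next
        case F1: False
        show ?thesis
        proof (cases "z = v")
          case True then show ?thesis using ptsI[of x u v y \<alpha>] h z by auto
        next
          case False then show ?thesis using ptsI[of x u z y \<alpha>] ptsI[of x z v y \<beta>] h z xz F1
            by (auto simp: order.order_iff_strict)
        qed
      qed
    qed
    qed
  qed
  then show ?thesis by (simp add: FI_def conv_def)
qed

lemma conv_assoc:
  assumes a: "\<alpha> \<in> FI" and b: "\<beta> \<in> FI" and c: "\<gamma> \<in> FI"
  shows "conv (conv \<alpha> \<beta>) \<gamma> = conv \<alpha> (conv \<beta> \<gamma>)"
proof (intro ext)
  fix x y
  show "conv (conv \<alpha> \<beta>) \<gamma> x y = conv \<alpha> (conv \<beta> \<gamma>) x y"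
  proof (cases "x \<le> y")
    case False then show ?thesis by (simp add: conv_def)
  next
    case xy: True
    define S where "S = insert x (insert y (pts \<alpha> x y \<union> pts \<beta> x y \<union> pts \<gamma> x y))"
    have fS: "finite S" unfolding S_def using a b c finite_pts by blast
    have inner1: "conv \<alpha> \<beta> x z = (\<Sum>w\<in>S. if x \<le> w \<and> w \<le> z then \<alpha> x w * \<beta> w z else 0)"
      if "x \<le> z" "z \<le> y" for z
    proof (rule conv_S[OF fS that(1)])
      fix w assume "x \<le> w" "w \<le> z" "\<alpha> x w * \<beta> w z \<noteq> 0"
      then show "w \<in> S" using ptsI[of x x w y \<alpha>] that order_trans unfolding S_def
        by (metis UnI1 insert_iff mult_eq_0_iff order.order_iff_strict order.refl)
    qed
    have inner2: "conv \<beta> \<gamma> w y = (\<Sum>z\<in>S. if w \<le> z \<and> z \<le> y then \<beta> w z * \<gamma> z y else 0)"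
      if "x \<le> w" "w \<le> y" for w
    proof (rule conv_S[OF fS that(2)])
      fix z assume "w \<le> z" "z \<le> y" "\<beta> w z * \<gamma> z y \<noteq> 0"
      then show "z \<in> S" using ptsI[of x z y y \<gamma>] that order_trans unfolding S_def
        by (metis UnI2 insert_iff mult_eq_0_iff order.order_iff_strict)
    qed
    have L: "conv (conv \<alpha> \<beta>) \<gamma> x y = (\<Sum>z\<in>S. if x \<le> z \<and> z \<le> y then conv \<alpha> \<beta> x z * \<gamma> z y else 0)"
    proof (rule conv_S[OF fS xy])
      fix z assume "x \<le> z" "z \<le> y" "conv \<alpha> \<beta> x z * \<gamma> z y \<noteq> 0"
      then show "z \<in> S" using ptsI[of x z y y \<gamma>] unfolding S_def
        by (metis UnI2 insert_iff mult_eq_0_iff order.order_iff_strict)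
    qed
    have R: "conv \<alpha> (conv \<beta> \<gamma>) x y = (\<Sum>w\<in>S. if x \<le> w \<and> w \<le> y then \<alpha> x w * conv \<beta> \<gamma> w y else 0)"
    proof (rule conv_S[OF fS xy])
      fix w assume "x \<le> w" "w \<le> y" "\<alpha> x w * conv \<beta> \<gamma> w y \<noteq> 0"
      then show "w \<in> S" using ptsI[of x x w y \<alpha>] unfolding S_def
        by (metis UnI1 insert_iff mult_eq_0_iff order.order_iff_strict)
    qed
    have L2: "conv (conv \<alpha> \<beta>) \<gamma> x y = (\<Sum>z\<in>S. \<Sum>w\<in>S. if x \<le> w \<and> w \<le> z \<and> z \<le> y then \<alpha> x w * \<beta> w z * \<gamma> z y else 0)"
      unfolding L
    proof (rule sum.cong[OF refl])
      fix z assume "z \<in> S"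
      show "(if x \<le> z \<and> z \<le> y then conv \<alpha> \<beta> x z * \<gamma> z y else 0) =
         (\<Sum>w\<in>S. if x \<le> w \<and> w \<le> z \<and> z \<le> y then \<alpha> x w * \<beta> w z * \<gamma> z y else 0)"
      proof (cases "x \<le> z \<and> z \<le> y")
        case True
        then show ?thesis using inner1[of z] by (auto simp add: sum_distrib_right intro!: sum.cong)
      next
        case False
        then have "\<forall>w\<in>S. (if x \<le> w \<and> w \<le> z \<and> z \<le> y then \<alpha> x w * \<beta> w z * \<gamma> z y else 0) = 0"
          using order_trans by (metis (full_types))
        then show ?thesis using False by (auto simp add: sum.neutral simp del: mult_eq_0_iff)
      qed
    qed
    have R2: "conv \<alpha> (conv \<beta> \<gamma>) x y = (\<Sum>w\<in>S. \<Sum>z\<in>S. if x \<le> w \<and> w \<le> z \<and> z \<le> y then \<alpha> x w * \<beta> w z * \<gamma> z y else 0)"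
      unfolding R
    proof (rule sum.cong[OF refl])
      fix w assume "w \<in> S"
      show "(if x \<le> w \<and> w \<le> y then \<alpha> x w * conv \<beta> \<gamma> w y else 0) =
         (\<Sum>z\<in>S. if x \<le> w \<and> w \<le> z \<and> z \<le> y then \<alpha> x w * \<beta> w z * \<gamma> z y else 0)"
      proof (cases "x \<le> w \<and> w \<le> y")
        case True
        then show ?thesis using inner2[of w] by (auto simp add: sum_distrib_left mult.assoc intro!: sum.cong)
      next
        case False
        then have "\<forall>z\<in>S. (if x \<le> w \<and> w \<le> z \<and> z \<le> y then \<alpha> x w * \<beta> w z * \<gamma> z y else 0) = 0"
          using order_trans by (metis (full_types))
        then show ?thesis using False by (auto simp add: sum.neutral simp del: mult_eq_0_iff)
      qed
    qed
    show ?thesis unfolding L2 R2 by (rule sum.swap)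
  qed
qed

lemma conv_distrib_left:
  assumes a: "\<alpha> \<in> FI" and b: "\<beta> \<in> FI" and c: "\<gamma> \<in> FI"
  shows "conv \<alpha> (\<lambda>x y. \<beta> x y + \<gamma> x y) = (\<lambda>x y. conv \<alpha> \<beta> x y + conv \<alpha> \<gamma> x y)"
proof (intro ext)
  fix x y
  show "conv \<alpha> (\<lambda>x y. \<beta> x y + \<gamma> x y) x y = conv \<alpha> \<beta> x y + conv \<alpha> \<gamma> x y"
  proof (cases "x \<le> y")
    case False then show ?thesis by (simp add: conv_def)
  next
    case xy: True
    define S where "S = {z. x \<le> z \<and> z \<le> y \<and> \<alpha> x z * (1::'b) \<noteq> 0}"
    have fS: "finite S" unfolding S_def by (rule supp_fin1[OF a])
    have "conv \<alpha> (\<lambda>x y. \<beta> x y + \<gamma> x y) x y = (\<Sum>z\<in>S. if x \<le> z \<and> z \<le> y then \<alpha> x z * (\<beta> z y + \<gamma> z y) else 0)"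
      by (rule conv_S[OF fS xy]) (auto simp: S_def)
    moreover have "conv \<alpha> \<beta> x y = (\<Sum>z\<in>S. if x \<le> z \<and> z \<le> y then \<alpha> x z * \<beta> z y else 0)"
      by (rule conv_S[OF fS xy]) (auto simp: S_def)
    moreover have "conv \<alpha> \<gamma> x y = (\<Sum>z\<in>S. if x \<le> z \<and> z \<le> y then \<alpha> x z * \<gamma> z y else 0)"
      by (rule conv_S[OF fS xy]) (auto simp: S_def)
    ultimately show ?thesis by (simp add: sum.distrib[symmetric] distrib_left if_distrib cong: if_cong)
  qed
qed

lemma conv_distrib_right:
  assumes a: "\<alpha> \<in> FI" and b: "\<beta> \<in> FI" and c: "\<gamma> \<in> FI"
  shows "conv (\<lambda>x y. \<alpha> x y + \<beta> x y) \<gamma> = (\<lambda>x y. conv \<alpha> \<gamma> x y + conv \<beta> \<gamma> x y)"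
proof (intro ext)
  fix x y
  show "conv (\<lambda>x y. \<alpha> x y + \<beta> x y) \<gamma> x y = conv \<alpha> \<gamma> x y + conv \<beta> \<gamma> x y"
  proof (cases "x \<le> y")
    case False then show ?thesis by (simp add: conv_def)
  next
    case xy: True
    define S where "S = {z. x \<le> z \<and> z \<le> y \<and> (1::'b) * \<gamma> z y \<noteq> 0}"
    have fS: "finite S" unfolding S_def by (rule supp_fin2[OF c])
    have "conv (\<lambda>x y. \<alpha> x y + \<beta> x y) \<gamma> x y = (\<Sum>z\<in>S. if x \<le> z \<and> z \<le> y then (\<alpha> x z + \<beta> x z) * \<gamma> z y else 0)"
      by (rule conv_S[OF fS xy]) (auto simp: S_def)
    moreover have "conv \<alpha> \<gamma> x y = (\<Sum>z\<in>S. if x \<le> z \<and> z \<le> y then \<alpha> x z * \<gamma> z y else 0)"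
      by (rule conv_S[OF fS xy]) (auto simp: S_def)
    moreover have "conv \<beta> \<gamma> x y = (\<Sum>z\<in>S. if x \<le> z \<and> z \<le> y then \<beta> x z * \<gamma> z y else 0)"
      by (rule conv_S[OF fS xy]) (auto simp: S_def)
    ultimately show ?thesis by (simp add: sum.distrib[symmetric] distrib_right if_distrib cong: if_cong)
  qed
qed

lemma conv_delta_left: assumes "\<alpha> \<in> FI" shows "conv delta \<alpha> = \<alpha>"
proof (intro ext)
  fix x y
  show "conv delta \<alpha> x y = \<alpha> x y"
  proof (cases "x \<le> y")
    case False then show ?thesis using assms by (simp add: conv_def FI_zero)
  next
    case True
    have "conv delta \<alpha> x y = (\<Sum>z\<in>{x}. if x \<le> z \<and> z \<le> y then delta x z * \<alpha> z y else 0)"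
      by (rule conv_S[OF _ True]) (auto simp: delta_def split: if_splits)
    then show ?thesis using True by (simp add: delta_def)
  qed
qed

lemma conv_delta_right: assumes "\<alpha> \<in> FI" shows "conv \<alpha> delta = \<alpha>"
proof (intro ext)
  fix x y
  show "conv \<alpha> delta x y = \<alpha> x y"
  proof (cases "x \<le> y")
    case False then show ?thesis using assms by (simp add: conv_def FI_zero)
  next
    case True
    have "conv \<alpha> delta x y = (\<Sum>z\<in>{y}. if x \<le> z \<and> z \<le> y then \<alpha> x z * delta z y else 0)"
      by (rule conv_S[OF _ True]) (auto simp: delta_def split: if_splits)
    then show ?thesis using True by (simp add: delta_def)
  qed
qed

lemma zero_FI: "(\<lambda>_ _. 0) \<in> FI"
  by (simp add: FI_def finitary_def)

lemma delta_FI: "delta \<in> FI"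
  by (auto simp: FI_def finitary_def delta_def)

lemma add_FI: assumes "\<alpha> \<in> FI" "\<beta> \<in> FI" shows "(\<lambda>x y. \<alpha> x y + \<beta> x y) \<in> FI"
proof -
  have "finitary (\<lambda>x y. \<alpha> x y + \<beta> x y)"
  proof (rule finitary_intro)
    fix x y :: 'a assume "x < y"
    show "\<exists>A. finite A \<and> (\<forall>u v. x \<le> u \<and> u < v \<and> v \<le> y \<and> \<alpha> u v + \<beta> u v \<noteq> 0 \<longrightarrow> u \<in> A \<and> v \<in> A)"
      apply (rule exI[of _ "pts \<alpha> x y \<union> pts \<beta> x y"])
      using assms finite_pts ptsI[of x _ _ y \<alpha>] ptsI[of x _ _ y \<beta>] by fastforce
  qed
  then show ?thesis using assms by (simp add: FI_def)
qed

lemma uminus_FI: assumes "\<alpha> \<in> FI" shows "(\<lambda>x y. - \<alpha> x y) \<in> FI"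
  using assms by (simp add: FI_def finitary_def)

lemma diff_FI: assumes "\<alpha> \<in> FI" "\<beta> \<in> FI" shows "(\<lambda>x y. \<alpha> x y - \<beta> x y) \<in> FI"
  using add_FI[OF assms(1) uminus_FI[OF assms(2)]] by simp



typedef (overloaded) ('p::order, 'k::field) fi = "FI :: ('p \<Rightarrow> 'p \<Rightarrow> 'k) set"
  morphisms R Abs
  using zero_FI by blast

setup_lifting type_definition_fi

instantiation fi :: (order, field) ring_1
begin
lift_definition zero_fi :: "('a, 'b) fi" is "\<lambda>_ _. 0" by (rule zero_FI)
lift_definition one_fi :: "('a, 'b) fi" is delta by (rule delta_FI)
lift_definition plus_fi :: "('a, 'b) fi \<Rightarrow> ('a, 'b) fi \<Rightarrow> ('a, 'b) fi" is "\<lambda>\<alpha> \<beta> x y. \<alpha> x y + \<beta> x y" by (rule add_FI)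
lift_definition minus_fi :: "('a, 'b) fi \<Rightarrow> ('a, 'b) fi \<Rightarrow> ('a, 'b) fi" is "\<lambda>\<alpha> \<beta> x y. \<alpha> x y - \<beta> x y" by (rule diff_FI)
lift_definition uminus_fi :: "('a, 'b) fi \<Rightarrow> ('a, 'b) fi" is "\<lambda>\<alpha> x y. - \<alpha> x y" by (rule uminus_FI)
lift_definition times_fi :: "('a, 'b) fi \<Rightarrow> ('a, 'b) fi \<Rightarrow> ('a, 'b) fi" is conv by (rule conv_FI)
instance
proof
  fix a b c :: "('a, 'b) fi"
  show "a + b + c = a + (b + c)" by transfer (simp add: add.assoc)
  show "a + b = b + a" by transfer (simp add: add.commute)
  show "0 + a = a" by transfer simp
  show "- a + a = 0" by transfer simp
  show "a - b = a + - b" by transfer simp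
  show "a * b * c = a * (b * c)" by transfer (rule conv_assoc)
  show "(a + b) * c = a * c + b * c" by transfer (rule conv_distrib_right)
  show "a * (b + c) = a * b + a * c" by transfer (rule conv_distrib_left)
  show "1 * a = a" by transfer (rule conv_delta_left)
  show "a * 1 = a" by transfer (rule conv_delta_right)
  show "(0::('a, 'b) fi) \<noteq> 1" by transfer (metis delta_def zero_neq_one)
qed
end

lift_definition dg :: "('p::order, 'k::field) fi \<Rightarrow> 'p \<Rightarrow> 'k" is "\<lambda>\<alpha> x. \<alpha> x x" .

lemma conv_diag: "conv \<alpha> \<beta> x x = \<alpha> x x * \<beta> x x"
proof -
  have "conv \<alpha> \<beta> x x = (\<Sum>z\<in>{x}. if x \<le> z \<and> z \<le> x then \<alpha> x z * \<beta> z x else 0)"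
    by (rule conv_S) (auto intro: order.antisym)
  then show ?thesis by simp
qed

lemma dg_mult[simp]: "dg (a * b) x = dg a x * dg b x"
  by transfer (rule conv_diag)
lemma dg_one[simp]: "dg 1 x = 1" by transfer (simp add: delta_def)
lemma dg_zero[simp]: "dg 0 x = 0" by transfer simp
lemma dg_add[simp]: "dg (a + b) x = dg a x + dg b x" by transfer simp
lemma dg_diff[simp]: "dg (a - b) x = dg a x - dg b x" by transfer simp

lift_definition dmk :: "('p::order \<Rightarrow> 'k::field) \<Rightarrow> ('p, 'k) fi" is "\<lambda>d x y. if x = y then d x else 0"
  by (auto simp: FI_def finitary_def)

lemma dg_dmk[simp]: "dg (dmk d) x = d x" by transfer simp

lemma dmk_mult: "dmk d * dmk e = dmk (\<lambda>x. d x * e x)"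
proof transfer
  fix d e :: "'a \<Rightarrow> 'b"
  show "conv (\<lambda>x y. if x = y then d x else 0) (\<lambda>x y. if x = y then e x else 0) = (\<lambda>x y. if x = y then d x * e x else 0)"
  proof (intro ext)
    fix x y :: 'a
    show "conv (\<lambda>x y. if x = y then d x else 0) (\<lambda>x y. if x = y then e x else 0) x y = (if x = y then d x * e x else 0)"
    proof (cases "x = y")
      case True then show ?thesis by (simp add: conv_diag)
    next
      case False
      then have "{z. x \<le> z \<and> z \<le> y \<and> (if x = z then d x else 0) * (if z = y then e z else 0) \<noteq> 0} = {}" by auto
      then show ?thesis using False by (simp add: conv_def)
    qed
  qed
qed



fun bf :: "nat \<Rightarrow> ('p::order \<Rightarrow> 'p \<Rightarrow> 'k::field) \<Rightarrow> 'p \<Rightarrow> 'p \<Rightarrow> 'k" where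
  "bf 0 a u v = (if u = v then inverse (a u u) else 0)"
| "bf (Suc n) a u v = (if u = v then inverse (a u u) else if u < v then
      - inverse (a u u) * (\<Sum>z\<in>{z. u < z \<and> z \<le> v \<and> a u z \<noteq> 0}. a u z * bf n a z v) else 0)"

lemma Z_fin: assumes "a \<in> FI" shows "finite {z. u < z \<and> z \<le> v \<and> a u z \<noteq> 0}"
proof -
  have "{z. u < z \<and> z \<le> v \<and> a u z \<noteq> 0} \<subseteq> snd ` NN a u v"
    unfolding NN_def by (force simp: image_iff)
  then show ?thesis using FI_finN[OF assms] finite_subset by blast
qed

lemma NN_less: assumes "a \<in> FI" "u < z" "z \<le> v" "a u z \<noteq> 0"
  shows "card (NN a z v) < card (NN a u v)"
proof (rule psubset_card_mono)
  show "finite (NN a u v)" using FI_finN[OF assms(1)] .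
  have "NN a z v \<subseteq> NN a u v" using assms(2) unfolding NN_def by auto
  moreover have "(u, z) \<in> NN a u v" "(u, z) \<notin> NN a z v" using assms unfolding NN_def by auto
  ultimately show "NN a z v \<subset> NN a u v" by blast
qed

lemma bf_stab: assumes "a \<in> FI"
  shows "card (NN a u v) < n \<Longrightarrow> card (NN a u v) < m \<Longrightarrow> bf n a u v = bf m a u v"
proof (induction "card (NN a u v)" arbitrary: u n m rule: less_induct)
  case less
  obtain n' where n: "n = Suc n'" using less.prems(1) by (cases n) auto
  obtain m' where m: "m = Suc m'" using less.prems(2) by (cases m) auto
  have "bf n' a z v = bf m' a z v" if "z \<in> {z. u < z \<and> z \<le> v \<and> a u z \<noteq> 0}" for z
  proof -
    have lt: "card (NN a z v) < card (NN a u v)" using NN_less[OF assms] that by auto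
    show ?thesis by (rule less.hyps[OF lt]) (use lt less.prems n m in auto)
  qed
  then show ?case unfolding n m by (auto intro!: sum.cong)
qed

definition binv :: "('p::order \<Rightarrow> 'p \<Rightarrow> 'k::field) \<Rightarrow> 'p \<Rightarrow> 'p \<Rightarrow> 'k" where
  "binv a u v = bf (Suc (card (NN a u v))) a u v"

lemma binv_diag: "binv a u u = inverse (a u u)"
  by (simp add: binv_def)

lemma binv_off: "\<not> u \<le> v \<Longrightarrow> binv a u v = 0"
  by (auto simp: binv_def)

lemma binv_rec: assumes "a \<in> FI" "u < v"
  shows "binv a u v = - inverse (a u u) * (\<Sum>z\<in>{z. u < z \<and> z \<le> v \<and> a u z \<noteq> 0}. a u z * binv a z v)"
proof -
  have "bf (card (NN a u v)) a z v = binv a z v" if "z \<in> {z. u < z \<and> z \<le> v \<and> a u z \<noteq> 0}" for z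
    unfolding binv_def using NN_less[OF assms(1)] that by (intro bf_stab[OF assms(1)]) auto
  then show ?thesis using assms(2) unfolding binv_def[of a u v] by (auto intro!: sum.cong)
qed

lemma binv_nz: assumes "a \<in> FI"
  shows "u < v \<Longrightarrow> binv a u v \<noteq> 0 \<Longrightarrow> \<exists>s. u \<le> s \<and> s < v \<and> a s v \<noteq> 0"
proof (induction "card (NN a u v)" arbitrary: u rule: less_induct)
  case less
  have SNZ: "(\<Sum>z\<in>{z. u < z \<and> z \<le> v \<and> a u z \<noteq> 0}. a u z * binv a z v) \<noteq> 0"
  proof
    assume "(\<Sum>z\<in>{z. u < z \<and> z \<le> v \<and> a u z \<noteq> 0}. a u z * binv a z v) = 0"
    then have "binv a u v = 0" using binv_rec[OF assms less.prems(1)] by (simp only: mult_zero_right)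
    then show False using less.prems(2) by (simp only: not_True_eq_False)
  qed
  then obtain z where z: "u < z" "z \<le> v" "a u z \<noteq> 0" "binv a z v \<noteq> 0"
  proof -
    have "\<exists>z\<in>{z. u < z \<and> z \<le> v \<and> a u z \<noteq> 0}. a u z * binv a z v \<noteq> 0"
    proof (rule ccontr)
      assume "\<not> (\<exists>z\<in>{z. u < z \<and> z \<le> v \<and> a u z \<noteq> 0}. a u z * binv a z v \<noteq> 0)"
      then have "\<forall>z\<in>{z. u < z \<and> z \<le> v \<and> a u z \<noteq> 0}. a u z * binv a z v = 0" by blast
      then have "(\<Sum>z\<in>{z. u < z \<and> z \<le> v \<and> a u z \<noteq> 0}. a u z * binv a z v) = 0" by (rule sum.neutral)
      then show False using SNZ by (simp only: not_True_eq_False)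
    qed
    then obtain z where "z \<in> {z. u < z \<and> z \<le> v \<and> a u z \<noteq> 0}" "a u z * binv a z v \<noteq> 0" by blast
    then show ?thesis by (intro that) auto
  qed
  show ?case
  proof (cases "z = v")
    case True
    have "u \<le> u \<and> u < v \<and> a u v \<noteq> 0" using z True by simp
    then show ?thesis by blast
  next
    case False
    then have zv: "z < v" using z by auto
    have lt: "card (NN a z v) < card (NN a u v)" using NN_less[OF assms z(1-3)] .
    from less.hyps[OF lt zv z(4)] obtain s where s: "z \<le> s" "s < v" "a s v \<noteq> 0" by blast
    have "u \<le> s" using order.trans[OF less_imp_le[OF z(1)] s(1)] .
    then show ?thesis using s by blast
  qed
qed

lemma binv_nz2: assumes "a \<in> FI" "u < v" "binv a u v \<noteq> 0"
  shows "\<exists>z. u < z \<and> z \<le> v \<and> a u z \<noteq> 0"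
proof -
  have "(\<Sum>z\<in>{z. u < z \<and> z \<le> v \<and> a u z \<noteq> 0}. a u z * binv a z v) \<noteq> 0"
  proof
    assume "(\<Sum>z\<in>{z. u < z \<and> z \<le> v \<and> a u z \<noteq> 0}. a u z * binv a z v) = 0"
    then have "binv a u v = 0" using binv_rec[OF assms(1,2)] by (simp only: mult_zero_right)
    then show False using assms(3) by (simp only: not_True_eq_False)
  qed
  then have "{z. u < z \<and> z \<le> v \<and> a u z \<noteq> 0} \<noteq> {}" by (intro notI) (simp only: sum.empty, simp)
  then show ?thesis by blast
qed

lemma binv_FI: assumes "a \<in> FI" shows "binv a \<in> FI"
proof -
  have "finitary (binv a)"
  proof (rule finitary_intro)
    fix x y :: 'a assume "x < y"
    show "\<exists>A. finite A \<and> (\<forall>u v. x \<le> u \<and> u < v \<and> v \<le> y \<and> binv a u v \<noteq> 0 \<longrightarrow> u \<in> A \<and> v \<in> A)"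
    proof (rule exI[of _ "pts a x y"], rule conjI)
      show "finite (pts a x y)" by (rule finite_pts[OF assms])
      show "\<forall>u v. x \<le> u \<and> u < v \<and> v \<le> y \<and> binv a u v \<noteq> 0 \<longrightarrow> u \<in> pts a x y \<and> v \<in> pts a x y"
      proof (intro allI impI)
        fix u v assume h: "x \<le> u \<and> u < v \<and> v \<le> y \<and> binv a u v \<noteq> 0"
        obtain z where z: "u < z" "z \<le> v" "a u z \<noteq> 0" using binv_nz2[OF assms] h by blast
        obtain s where s: "u \<le> s" "s < v" "a s v \<noteq> 0" using binv_nz[OF assms] h by blast
        have zy: "z \<le> y" using order.trans[OF z(2)] h by blast
        have xs: "x \<le> s" using order.trans[OF _ s(1)] h by blast
        have "u \<in> pts a x y" using ptsI[of x u z y a, OF _ z(1) zy z(3)] h by blast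
        moreover have "v \<in> pts a x y" using ptsI[of x s v y a, OF xs s(2) _ s(3)] h by blast
        ultimately show "u \<in> pts a x y \<and> v \<in> pts a x y" by blast
      qed
    qed
  qed
  then show ?thesis by (simp add: FI_def binv_off)
qed

lemma conv_binv: assumes "a \<in> FI" "\<And>x. a x x \<noteq> 0" shows "conv a (binv a) = delta"
proof (intro ext)
  fix u v
  show "conv a (binv a) u v = delta u v"
  proof (cases "u \<le> v")
    case False then show ?thesis by (auto simp: conv_def delta_def)
  next
    case uv: True
    show ?thesis
    proof (cases "u = v")
      case True
      have "conv a (binv a) u u = (\<Sum>z\<in>{u}. if u \<le> z \<and> z \<le> u then a u z * binv a z u else 0)"
        by (rule conv_S) (auto intro: order.antisym)
      then show ?thesis using True assms(2)[of u] by (simp add: binv_diag delta_def)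
    next
      case False
      then have lt: "u < v" using uv by auto
      define Z where "Z = {z. u < z \<and> z \<le> v \<and> a u z \<noteq> 0}"
      have fZ: "finite Z" unfolding Z_def by (rule Z_fin[OF assms(1)])
      have "conv a (binv a) u v = (\<Sum>z\<in>insert u Z. if u \<le> z \<and> z \<le> v then a u z * binv a z v else 0)"
        by (rule conv_S[OF _ uv]) (use fZ in \<open>auto simp: Z_def order.order_iff_strict\<close>)
      also have "\<dots> = a u u * binv a u v + (\<Sum>z\<in>Z. if u \<le> z \<and> z \<le> v then a u z * binv a z v else 0)"
        using fZ uv by (simp add: Z_def)
      also have "(\<Sum>z\<in>Z. if u \<le> z \<and> z \<le> v then a u z * binv a z v else 0) = (\<Sum>z\<in>Z. a u z * binv a z v)"
        by (rule sum.cong) (auto simp: Z_def)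
      also have "a u u * binv a u v = - (\<Sum>z\<in>Z. a u z * binv a z v)"
        using binv_rec[OF assms(1) lt] assms(2)[of u] by (simp add: Z_def)
      finally show ?thesis using False by (simp add: delta_def)
    qed
  qed
qed



lemma right_inv_fi: assumes "\<And>x. dg a x \<noteq> 0" shows "\<exists>b. a * b = 1 \<and> (\<forall>x. dg b x \<noteq> 0)"
proof -
  have aFI: "R a \<in> FI" using R by blast
  have bFI: "binv (R a) \<in> FI" by (rule binv_FI[OF aFI])
  define b where "b = (Abs (binv (R a)) :: ('a, 'b) fi)"
  have Rb: "R b = binv (R a)" unfolding b_def using Abs_inverse[OF bFI] .
  have "R (a * b) = R 1"
    unfolding times_fi.rep_eq one_fi.rep_eq Rb
    by (rule conv_binv[OF aFI]) (use assms in \<open>simp add: dg.rep_eq\<close>)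
  then have "a * b = 1" using R_inject by blast
  moreover have "dg b x \<noteq> 0" for x using assms[of x] by (simp add: dg.rep_eq Rb binv_diag)
  ultimately show ?thesis by blast
qed

lemma unit_fi: assumes "\<And>x. dg a x \<noteq> 0" shows "\<exists>b. a * b = 1 \<and> b * a = 1"
proof -
  obtain b where b: "a * b = 1" "\<And>x. dg b x \<noteq> 0" using right_inv_fi[OF assms] by blast
  obtain c where c: "b * c = 1" using right_inv_fi[OF b(2)] by blast
  have "a = c" by (metis b(1) c mult.assoc mult_1_left mult_1_right)
  then show ?thesis using b c by blast
qed

lemma reg_if:
  fixes A B E G :: "('p::order, 'k::field) fi"
  assumes "A = B * E * G" "B * B' = 1" "B' * B = 1" "G * G' = 1" "G' * G = 1" "E * E = E"
  shows "A * (G' * E * B') * A = A"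
proof -
  have "A * (G' * E * B') * A = B * E * (G * G') * E * (B' * B) * E * G"
    using assms(1) by (simp add: mult.assoc)
  also have "\<dots> = B * (E * E) * E * G" using assms by (simp add: mult.assoc)
  also have "\<dots> = A" using assms by (metis mult.assoc)
  finally show ?thesis .
qed

lemma dsq: "(d::'k::field) * d = d \<Longrightarrow> d = 0 \<or> d = 1"
  by (metis mult_cancel_left2 mult_eq_0_iff)

lemma reg_only_if:
  fixes A X :: "('p::order, 'k::field) fi"
  assumes AXA: "A * X * A = A"
  shows "\<exists>d B G B' G'. (\<forall>x. d x * d x = d x) \<and> B * B' = 1 \<and> B' * B = 1 \<and> G * G' = 1 \<and> G' * G = 1
     \<and> A = B * dmk d * G"
proof -
  define d where "d x = dg A x * dg X x" for x
  have dd: "d x * d x = d x" for x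
  proof -
    have "dg A x * dg X x * dg A x = dg A x" using arg_cong[OF AXA, of "\<lambda>M. dg M x"] by simp
    then show ?thesis unfolding d_def by (metis mult.assoc)
  qed
  define E where "E = dmk d"
  have EE: "E * E = E" unfolding E_def dmk_mult by (simp only: dd)
  have EE': "E * (E * Y) = E * Y" for Y using EE by (metis mult.assoc)
  have dgE: "dg E x = d x" for x unfolding E_def by simp
  define e where "e = A * X"
  define f where "f = X * A"
  have ee: "e * (e * Y) = e * Y" for Y unfolding e_def by (metis AXA mult.assoc)
  have ff: "f * (f * Y) = f * Y" for Y unfolding f_def by (metis AXA mult.assoc)
  have ee0: "e * e = e" using ee[of 1] by simp
  have ff0: "f * f = f" using ff[of 1] by simp
  have dge: "dg e x = d x" for x unfolding e_def d_def by simp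
  have dgf: "dg f x = d x" for x unfolding f_def d_def by (simp add: mult.commute)
  have d01: "d x = 0 \<or> d x = 1" for x using dsq[OF dd] .
  define U where "U = e * E + (1 - e) * (1 - E)"
  define V where "V = f * E + (1 - f) * (1 - E)"
  have UE: "U * E = e * E" unfolding U_def by (simp add: algebra_simps EE EE')
  have eU: "e * U = U * E" unfolding UE unfolding U_def by (simp add: algebra_simps ee ee0)
  have VE: "V * E = f * E" unfolding V_def by (simp add: algebra_simps EE EE')
  have fV: "f * V = V * E" unfolding VE unfolding V_def by (simp add: algebra_simps ff ff0)
  have dgU: "dg U x \<noteq> 0" for x using d01[of x] unfolding U_def by (auto simp: dge dgE)
  have dgV: "dg V x \<noteq> 0" for x using d01[of x] unfolding V_def by (auto simp: dgf dgE)
  obtain U' where U': "U * U' = 1" "U' * U = 1" using unit_fi[OF dgU] by blast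
  obtain V' where V': "V * V' = 1" "V' * V = 1" using unit_fi[OF dgV] by blast
  define A' where "A' = U' * A * V"
  define X' where "X' = V' * X * U"
  have A'X': "A' * X' = E"
  proof -
    have "A' * X' = U' * (A * (V * V') * X) * U" unfolding A'_def X'_def by (simp add: mult.assoc)
    also have "\<dots> = U' * (e * U)" using V' unfolding e_def by (simp add: mult.assoc)
    also have "\<dots> = (U' * U) * E" unfolding eU by (simp add: mult.assoc)
    finally show ?thesis using U' by simp
  qed
  have X'A': "X' * A' = E"
  proof -
    have "X' * A' = V' * (X * (U * U') * A) * V" unfolding A'_def X'_def by (simp add: mult.assoc)
    also have "\<dots> = V' * (f * V)" using U' unfolding f_def by (simp add: mult.assoc)
    also have "\<dots> = (V' * V) * E" unfolding fV by (simp add: mult.assoc)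
    finally show ?thesis using V' by simp
  qed
  have A'XA': "A' * X' * A' = A'"
  proof -
    have "A' * X' * A' = U' * (A * (V * V') * X * (U * U') * A) * V" unfolding A'_def X'_def by (simp add: mult.assoc)
    also have "\<dots> = U' * (A * X * A) * V" using U' V' by simp
    finally show ?thesis using AXA unfolding A'_def by simp
  qed
  have A'E: "A' * E = A'" using A'XA' X'A' by (metis mult.assoc)
  have EA': "E * A' = A'" using A'XA' A'X' by metis
  define \<beta> where "\<beta> = A' + 1 - E"
  have dg\<beta>: "dg \<beta> x \<noteq> 0" for x
  proof -
    have h1: "dg A' x * dg X' x = d x" using arg_cong[OF A'X', of "\<lambda>M. dg M x"] dgE by simp
    have h2: "d x * dg A' x = dg A' x" using arg_cong[OF EA', of "\<lambda>M. dg M x"] dgE by simp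
    show ?thesis using d01[of x]
    proof
      assume "d x = 0" then show ?thesis using h2 by (simp add: \<beta>_def dgE)
    next
      assume d1: "d x = 1" then have "dg A' x \<noteq> 0" using h1 by auto
      then show ?thesis using d1 by (simp add: \<beta>_def dgE)
    qed
  qed
  have \<beta>E: "\<beta> * E = A'" unfolding \<beta>_def by (simp add: algebra_simps A'E EE)
  have AU: "A = U * A' * V'"
  proof -
    have "U * A' * V' = (U * U') * A * (V * V')" unfolding A'_def by (simp add: mult.assoc)
    then show ?thesis using U' V' by simp
  qed
  obtain \<beta>' where \<beta>': "\<beta> * \<beta>' = 1" "\<beta>' * \<beta> = 1" using unit_fi[OF dg\<beta>] by blast
  have "A = (U * \<beta>) * dmk d * V'" unfolding AU \<beta>E[symmetric] E_def by (simp add: mult.assoc)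
  moreover have "(U * \<beta>) * (\<beta>' * U') = 1" using \<beta>' U' by (metis mult.assoc mult_1_left)
  moreover have "(\<beta>' * U') * (U * \<beta>) = 1" using \<beta>' U' by (metis mult.assoc mult_1_left)
  ultimately show ?thesis using dd V' by blast
qed



lemma R_ex: "\<alpha> \<in> FI \<Longrightarrow> \<exists>A. \<alpha> = R A"
  using Abs_inverse by metis

lemma convR: "conv (R a) (R b) = R (a * b)" by (simp add: times_fi.rep_eq)
lemma deltaR: "delta = R 1" by (simp add: one_fi.rep_eq)

lemma inv_iff: "invertible_FI (R B) \<longleftrightarrow> (\<exists>B'. B * B' = 1 \<and> B' * B = 1)"
proof
  assume "invertible_FI (R B)"
  then obtain \<beta>' where "\<beta>' \<in> FI" "conv (R B) \<beta>' = delta" "conv \<beta>' (R B) = delta"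
    unfolding invertible_FI_def by blast
  moreover obtain B' where "\<beta>' = R B'" using R_ex[OF \<open>\<beta>' \<in> FI\<close>] by blast
  ultimately show "\<exists>B'. B * B' = 1 \<and> B' * B = 1"
    by (metis convR deltaR R_inject)
next
  assume "\<exists>B'. B * B' = 1 \<and> B' * B = 1"
  then obtain B' where "B * B' = 1" "B' * B = 1" by blast
  then show "invertible_FI (R B)" unfolding invertible_FI_def
    using R[of B] R[of B'] by (metis convR deltaR)
qed

lemma reg_iff: "regular_FI (R A) \<longleftrightarrow> (\<exists>X. A * X * A = A)"
proof
  assume "regular_FI (R A)"
  then obtain \<chi> where "\<chi> \<in> FI" "conv (conv (R A) \<chi>) (R A) = R A" unfolding regular_FI_def by blast
  moreover obtain X where "\<chi> = R X" using R_ex[OF \<open>\<chi> \<in> FI\<close>] by blast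
  ultimately show "\<exists>X. A * X * A = A" by (metis convR R_inject)
next
  assume "\<exists>X. A * X * A = A"
  then obtain X where "A * X * A = A" by blast
  then show "regular_FI (R A)" unfolding regular_FI_def using R[of X] by (metis convR)
qed

theorem theorem4:
  fixes \<alpha> :: "'p::order \<Rightarrow> 'p \<Rightarrow> 'k::field"
  assumes "\<alpha> \<in> FI"
  shows "regular_FI \<alpha> \<longleftrightarrow>
    (\<exists>\<epsilon> \<beta> \<gamma>. \<epsilon> \<in> FI \<and> diagonal \<epsilon> \<and> idempotent_FI \<epsilon> \<and>
       invertible_FI \<beta> \<and> invertible_FI \<gamma> \<and> \<alpha> = conv (conv \<beta> \<epsilon>) \<gamma>)"
proof -
  obtain A where A: "\<alpha> = R A" using R_ex[OF assms] by blast
  show ?thesis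
  proof
    assume "regular_FI \<alpha>"
    then obtain X where "A * X * A = A" unfolding A reg_iff by blast
    from reg_only_if[OF this] obtain d B G B' G' where
      h: "\<forall>x. d x * d x = d x" "B * B' = 1" "B' * B = 1" "G * G' = 1" "G' * G = 1" "A = B * dmk d * G"
      by blast
    have "R (dmk d) \<in> FI" by (rule R)
    moreover have "diagonal (R (dmk d))" by (simp add: diagonal_def dmk.rep_eq)
    moreover have "idempotent_FI (R (dmk d))" unfolding idempotent_FI_def convR dmk_mult
      using h(1) by (simp only:)
    moreover have "invertible_FI (R B)" "invertible_FI (R G)" unfolding inv_iff using h by blast+
    moreover have "\<alpha> = conv (conv (R B) (R (dmk d))) (R G)" unfolding convR A h(6) ..
    ultimately show "\<exists>\<epsilon> \<beta> \<gamma>. \<epsilon> \<in> FI \<and> diagonal \<epsilon> \<and> idempotent_FI \<epsilon> \<and>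
       invertible_FI \<beta> \<and> invertible_FI \<gamma> \<and> \<alpha> = conv (conv \<beta> \<epsilon>) \<gamma>" by blast
  next
    assume "\<exists>\<epsilon> \<beta> \<gamma>. \<epsilon> \<in> FI \<and> diagonal \<epsilon> \<and> idempotent_FI \<epsilon> \<and>
       invertible_FI \<beta> \<and> invertible_FI \<gamma> \<and> \<alpha> = conv (conv \<beta> \<epsilon>) \<gamma>"
    then obtain \<epsilon> \<beta> \<gamma> where h: "\<epsilon> \<in> FI" "idempotent_FI \<epsilon>" "invertible_FI \<beta>" "invertible_FI \<gamma>"
      "\<alpha> = conv (conv \<beta> \<epsilon>) \<gamma>" by blast
    obtain E where E: "\<epsilon> = R E" using R_ex[OF h(1)] by blast
    obtain B where B: "\<beta> = R B" using R_ex h(3) unfolding invertible_FI_def by blast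
    obtain G where G: "\<gamma> = R G" using R_ex h(4) unfolding invertible_FI_def by blast
    obtain B' where B': "B * B' = 1" "B' * B = 1" using h(3) unfolding B inv_iff by blast
    obtain G' where G': "G * G' = 1" "G' * G = 1" using h(4) unfolding G inv_iff by blast
    have EE: "E * E = E" using h(2) unfolding E idempotent_FI_def convR R_inject .
    have AA: "A = B * E * G" using h(5) unfolding A B E G convR R_inject .
    show "regular_FI \<alpha>" unfolding A reg_iff using reg_if[OF AA B' G' EE] by blast
  qed
qed

end
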